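(* Let $G=(N,E)$ be a finite DAG with influential set $S^{inf.}(G)=\{s_1,\dots,s_m\}$. Then $s_1$ has no out-edges in $G$, and $s_1$ has the maximum progeny in $G$, i.e. $p_{s_1}=\max_{i\in N}p_i$.
   Context: In a DAG $G=(N,E)$ with $N=\{1,\dots,n\}$, $P_i$ is the set of nodes having a directed path to $i$ (including $i$), and $p_i=|P_i|$. Write $p_i\succ p_j$ if $p_i>p_j$, or $p_i=p_j$ and $i<j$. Node $i$ is influential if, in the graph obtained from $G$ by deleting all out-edges of $i$, $p_i\succ p_j$ holds for all $j\ne i$ (progeny measured in that modified graph). The influential set $S^{inf.}(G)=\{s_1,\dots,s_m\}$ consists of all influential nodes, indexed so that $p_{s_1}\succ p_{s_2}\succ\cdots\succ p_{s_m}$, with progeny measured in $G$. *)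

theory Defs
  imports Main
begin

text \<open>A DAG on the node set N = {1..n} with edge relation E (pairs (a,b) mean a -> b).\<close>

definition nodes :: "nat \<Rightarrow> nat set" where
  "nodes n = {1..n}"

definition is_dag :: "nat \<Rightarrow> (nat \<times> nat) set \<Rightarrow> bool" where
  "is_dag n E \<longleftrightarrow> E \<subseteq> nodes n \<times> nodes n \<and> acyclic E"

definition progeny_set :: "nat \<Rightarrow> (nat \<times> nat) set \<Rightarrow> nat \<Rightarrow> nat set" where
  "progeny_set n E i = {j \<in> nodes n. (j, i) \<in> E\<^sup>*}"

definition progeny :: "nat \<Rightarrow> (nat \<times> nat) set \<Rightarrow> nat \<Rightarrow> nat" where
  "progeny n E i = card (progeny_set n E i)"

definition prog_succ :: "(nat \<Rightarrow> nat) \<Rightarrow> nat \<Rightarrow> nat \<Rightarrow> bool" where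
  "prog_succ p i j \<longleftrightarrow> p i > p j \<or> (p i = p j \<and> i < j)"

definition del_out :: "(nat \<times> nat) set \<Rightarrow> nat \<Rightarrow> (nat \<times> nat) set" where
  "del_out E i = {e \<in> E. fst e \<noteq> i}"

definition influential :: "nat \<Rightarrow> (nat \<times> nat) set \<Rightarrow> nat \<Rightarrow> bool" where
  "influential n E i \<longleftrightarrow> i \<in> nodes n \<and>
     (\<forall>j \<in> nodes n. j \<noteq> i \<longrightarrow> prog_succ (progeny n (del_out E i)) i j)"

definition influential_set :: "nat \<Rightarrow> (nat \<times> nat) set \<Rightarrow> nat set" where
  "influential_set n E = {i. influential n E i}"

end

theory Submission
  imports Defs
begin

lemma fin_ps: "finite (progeny_set n E i)"
  unfolding progeny_set_def nodes_def by auto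

theorem mainTheorem5:
  fixes n :: nat and E :: "(nat \<times> nat) set" and s1 :: nat
  assumes "is_dag n E"
    and "s1 \<in> influential_set n E"
    and "\<forall>t \<in> influential_set n E. t \<noteq> s1 \<longrightarrow> prog_succ (progeny n E) s1 t"
  shows "(\<forall>j. (s1, j) \<notin> E) \<and> progeny n E s1 = Max (progeny n E ` nodes n)"
proof -
  let ?p = "progeny n E"
  define M where "M = Max (?p ` nodes n)"
  have s1N: "s1 \<in> nodes n" using assms(2) unfolding influential_set_def influential_def by auto
  have finN: "finite (nodes n)" unfolding nodes_def by auto
  have Mle: "\<And>j. j \<in> nodes n \<Longrightarrow> ?p j \<le> M" unfolding M_def using finN by auto
  have "M \<in> ?p ` nodes n" unfolding M_def using finN s1N by (intro Max_in) auto
  then have ne: "{i \<in> nodes n. ?p i = M} \<noteq> {}" by auto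
  define m where "m = Min {i \<in> nodes n. ?p i = M}"
  have "m \<in> {i \<in> nodes n. ?p i = M}" unfolding m_def using ne finN by (intro Min_in) auto
  then have mN: "m \<in> nodes n" and pm: "?p m = M" by auto
  have mmin: "\<And>i. i \<in> nodes n \<Longrightarrow> ?p i = M \<Longrightarrow> m \<le> i" unfolding m_def using finN by auto
  have msucc: "\<And>j. j \<in> nodes n \<Longrightarrow> j \<noteq> m \<Longrightarrow> prog_succ ?p m j"
  proof -
    fix j assume j: "j \<in> nodes n" "j \<noteq> m"
    show "prog_succ ?p m j"
    proof (cases "?p j = M")
      case True then have "m \<le> j" using mmin j by auto
      then show ?thesis using j True pm unfolding prog_succ_def by auto
    next
      case False then show ?thesis using Mle[OF j(1)] pm unfolding prog_succ_def by auto
    qed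
  qed
  have sink: "\<And>k. (m, k) \<notin> E"
  proof
    fix k assume mk: "(m, k) \<in> E"
    have EN: "E \<subseteq> nodes n \<times> nodes n" and ac: "acyclic E" using assms(1) unfolding is_dag_def by auto
    have kN: "k \<in> nodes n" using mk EN by auto
    have sub: "progeny_set n E m \<subseteq> progeny_set n E k"
      unfolding progeny_set_def using mk by (auto intro: rtrancl_into_rtrancl)
    have kin: "k \<in> progeny_set n E k" unfolding progeny_set_def using kN by auto
    have knot: "k \<notin> progeny_set n E m"
    proof
      assume "k \<in> progeny_set n E m"
      then have "(k, m) \<in> E\<^sup>*" unfolding progeny_set_def by auto
      then have "(m, m) \<in> E\<^sup>+" using mk by (meson rtrancl_into_trancl2)
      then show False using ac unfolding acyclic_def by auto
    qed
    have "progeny_set n E m \<subset> progeny_set n E k" using sub kin knot by auto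
    then have "?p m < ?p k" unfolding progeny_def using fin_ps by (simp add: psubset_card_mono)
    then show False using Mle[OF kN] pm by auto
  qed
  have "del_out E m = E" unfolding del_out_def using sink by auto
  then have "influential n E m" unfolding influential_def using mN msucc by simp
  then have mI: "m \<in> influential_set n E" unfolding influential_set_def by auto
  have "s1 = m"
  proof (rule ccontr)
    assume ne: "s1 \<noteq> m"
    then have "prog_succ ?p s1 m" using assms(3) mI by auto
    moreover have "prog_succ ?p m s1" using msucc s1N ne by auto
    ultimately show False unfolding prog_succ_def by auto
  qed
  then show ?thesis using sink pm M_def by auto
qed

end
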